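(* Every graph admits a Helly EPG representation.
   Context: A grid is the set of integer points of the plane; a grid edge joins two grid points at distance $1$. A path in the grid is a sequence of distinct grid edges in which consecutive edges share exactly one grid point and non-consecutive edges share none. An EPG representation of a graph $G$ is a family $(P_v)_{v\in V(G)}$ of grid paths such that distinct $u,v$ are adjacent iff $P_u,P_v$ share a grid edge. It is Helly if every subfamily of pairwise edge-intersecting paths has a grid edge common to all its members. *)

theory Defs
  imports Main
begin

type_synonym grid_point = "int \<times> int"
type_synonym grid_edge = "grid_point set"

definition is_grid_edge :: "grid_edge \<Rightarrow> bool" where
  "is_grid_edge e \<longleftrightarrow> (\<exists>p q. e = {p, q} \<and>
     (fst p - fst q)^2 + (snd p - snd q)^2 = 1)"

definition is_grid_path :: "grid_edge list \<Rightarrow> bool" where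
  "is_grid_path es \<longleftrightarrow> es \<noteq> [] \<and> distinct es \<and>
     (\<forall>i < length es. is_grid_edge (es ! i)) \<and>
     (\<forall>i. i + 1 < length es \<longrightarrow> card (es ! i \<inter> es ! (i + 1)) = 1) \<and>
     (\<forall>i j. j < length es \<longrightarrow> i + 1 < j \<longrightarrow> es ! i \<inter> es ! j = {})"

definition simple_graph :: "'a set \<Rightarrow> ('a \<Rightarrow> 'a \<Rightarrow> bool) \<Rightarrow> bool" where
  "simple_graph V Adj \<longleftrightarrow> finite V \<and>
     (\<forall>u v. Adj u v \<longrightarrow> u \<in> V \<and> v \<in> V) \<and>
     (\<forall>u v. Adj u v \<longrightarrow> Adj v u) \<and> (\<forall>v. \<not> Adj v v)"

definition EPG_rep :: "'a set \<Rightarrow> ('a \<Rightarrow> 'a \<Rightarrow> bool) \<Rightarrow> ('a \<Rightarrow> grid_edge list) \<Rightarrow> bool" where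
  "EPG_rep V Adj P \<longleftrightarrow> (\<forall>v\<in>V. is_grid_path (P v)) \<and>
     (\<forall>u\<in>V. \<forall>v\<in>V. u \<noteq> v \<longrightarrow> (Adj u v \<longleftrightarrow> set (P u) \<inter> set (P v) \<noteq> {}))"

definition Helly_rep :: "'a set \<Rightarrow> ('a \<Rightarrow> grid_edge list) \<Rightarrow> bool" where
  "Helly_rep V P \<longleftrightarrow> (\<forall>S \<subseteq> V.
     (\<forall>u\<in>S. \<forall>v\<in>S. set (P u) \<inter> set (P v) \<noteq> {}) \<longrightarrow>
     (\<exists>e. is_grid_edge e \<and> (\<forall>v\<in>S. e \<in> set (P v))))"

end

theory Submission
  imports Defs begin

fun edges :: "grid_point list \<Rightarrow> grid_edge list" where
  "edges (a # b # rest) = {a, b} # edges (b # rest)"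
| "edges _ = []"

definition adjp :: "grid_point \<Rightarrow> grid_point \<Rightarrow> bool" where
  "adjp p q \<longleftrightarrow> (fst p - fst q)^2 + (snd p - snd q)^2 = 1"

lemma edges_length: "length (edges ps) = length ps - 1"
  by (induction ps rule: edges.induct) auto

lemma edges_nth: "Suc i < length ps \<Longrightarrow> edges ps ! i = {ps ! i, ps ! Suc i}"
proof (induction ps arbitrary: i rule: edges.induct)
  case (1 a b rest)
  then show ?case by (cases i) auto
qed auto

lemma edges_append:
  "xs \<noteq> [] \<Longrightarrow> ys \<noteq> [] \<Longrightarrow> edges (xs @ ys) = edges xs @ {last xs, hd ys} # edges ys"
  by (induction xs rule: induct_list012) (auto simp: neq_Nil_conv)

lemma edges_succ:
  "successively Q ps \<Longrightarrow> e \<in> set (edges ps) \<Longrightarrow> \<exists>a b. e = {a,b} \<and> Q a b"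
  by (induction ps rule: edges.induct) auto

lemma grid_path_from_points:
  assumes d: "distinct ps" and l: "2 \<le> length ps" and s: "successively adjp ps"
  shows "is_grid_path (edges ps)"
proof -
  have E: "\<And>i. Suc i < length ps \<Longrightarrow> edges ps ! i = {ps ! i, ps ! Suc i}" by (rule edges_nth)
  have L: "length (edges ps) = length ps - 1" by (rule edges_length)
  have neq: "\<And>i j. i < length ps \<Longrightarrow> j < length ps \<Longrightarrow> i \<noteq> j \<Longrightarrow> ps ! i \<noteq> ps ! j"
    using d by (simp add: nth_eq_iff_index_eq)
  have ne: "edges ps \<noteq> []" using L l by auto
  have dist: "distinct (edges ps)"
    unfolding distinct_conv_nth
  proof (intro allI impI)
    fix i j assume i: "i < length (edges ps)" and j: "j < length (edges ps)" and ij: "i \<noteq> j"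
    show "edges ps ! i \<noteq> edges ps ! j"
    proof
      assume eq: "edges ps ! i = edges ps ! j"
      have "{ps ! i, ps ! Suc i} = {ps ! j, ps ! Suc j}" using eq E i j L by auto
      then have "(ps ! i = ps ! j \<and> ps ! Suc i = ps ! Suc j) \<or> (ps ! i = ps ! Suc j \<and> ps ! Suc i = ps ! j)"
        by (auto simp: doubleton_eq_iff)
      then show False using neq[of i j] neq[of i "Suc j"] neq[of "Suc i" j] i j ij L by fastforce
    qed
  qed
  have ge: "\<forall>i < length (edges ps). is_grid_edge (edges ps ! i)"
  proof (intro allI impI)
    fix i assume i: "i < length (edges ps)"
    then have "adjp (ps ! i) (ps ! Suc i)" using successively_nth[OF s, of i] L by auto
    then have "is_grid_edge {ps ! i, ps ! Suc i}" unfolding is_grid_edge_def adjp_def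
      by (intro exI[of _ "ps ! i"] exI[of _ "ps ! Suc i"]) simp
    then show "is_grid_edge (edges ps ! i)" using E[of i] i L by auto
  qed
  have c1: "\<forall>i. i + 1 < length (edges ps) \<longrightarrow> card (edges ps ! i \<inter> edges ps ! (i + 1)) = 1"
  proof (intro allI impI)
    fix i assume i: "i + 1 < length (edges ps)"
    have "edges ps ! i \<inter> edges ps ! (i + 1) = {ps ! Suc i}"
      using E[of i] E[of "Suc i"] i L neq[of i "Suc i"] neq[of i "Suc (Suc i)"] neq[of "Suc (Suc i)" "Suc i"]
      by auto
    then show "card (edges ps ! i \<inter> edges ps ! (i + 1)) = 1" by simp
  qed
  have c2: "\<forall>i j. j < length (edges ps) \<longrightarrow> i + 1 < j \<longrightarrow> edges ps ! i \<inter> edges ps ! j = {}"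
  proof (intro allI impI)
    fix i j assume j: "j < length (edges ps)" and ij: "i + 1 < j"
    show "edges ps ! i \<inter> edges ps ! j = {}"
      using E[of i] E[of j] j ij L neq[of i j] neq[of i "Suc j"] neq[of "Suc i" j] neq[of "Suc i" "Suc j"]
      by auto
  qed
  show ?thesis unfolding is_grid_path_def using ne dist ge c1 c2 by blast
qed


definition edge_ok :: "(nat \<Rightarrow> bool) \<Rightarrow> int \<Rightarrow> int \<Rightarrow> grid_edge \<Rightarrow> bool" where
  "edge_ok M r T e \<longleftrightarrow>
     (\<exists>x. e = {(x, r), (x + 1, r)} \<and> (odd x \<or> (\<exists>c. x = 2 * int c \<and> \<not> M c))) \<or>
     (\<exists>c. M c \<and> ((\<exists>y. e = {(2 * int c, y), (2 * int c, y + 1)} \<or>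
                        e = {(2 * int c + 1, y), (2 * int c + 1, y + 1)}) \<or>
                   e = {(2 * int c, T), (2 * int c + 1, T)}))"

lemma edge_ok_collide:
  assumes "edge_ok Mu ru T e" "edge_ok Mv rv T e" "ru \<noteq> rv" "ru < T" "rv < T"
  shows "\<exists>c. Mu c \<and> Mv c"
proof -
  from assms(1) consider
    (h) x where "e = {(x, ru), (x + 1, ru)}"
  | (v) c where "Mu c" "(\<exists>y. e = {(2 * int c, y), (2 * int c, y + 1)} \<or>
                        e = {(2 * int c + 1, y), (2 * int c + 1, y + 1)}) \<or>
                   e = {(2 * int c, T), (2 * int c + 1, T)}"
    unfolding edge_ok_def by blast
  then show ?thesis
  proof cases
    case h
    from assms(2) show ?thesis unfolding edge_ok_def
      using h assms(3,4,5) by (auto simp: doubleton_eq_iff)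
  next
    case v
    from assms(2) consider
      (h2) x where "e = {(x, rv), (x + 1, rv)}"
    | (v2) c' where "Mv c'" "(\<exists>y. e = {(2 * int c', y), (2 * int c', y + 1)} \<or>
                        e = {(2 * int c' + 1, y), (2 * int c' + 1, y + 1)}) \<or>
                   e = {(2 * int c', T), (2 * int c' + 1, T)}"
      unfolding edge_ok_def by blast
    then show ?thesis
    proof cases
      case h2
      then show ?thesis using v assms(3,4,5) by (auto simp: doubleton_eq_iff)
    next
      case v2
      have "c = c'" using v(2) v2(2) by (auto simp: doubleton_eq_iff)
      then show ?thesis using v v2 by blast
    qed
  qed
qed


definition blk :: "(nat \<Rightarrow> bool) \<Rightarrow> int \<Rightarrow> int \<Rightarrow> nat \<Rightarrow> grid_point list" where
  "blk M r T c = (if M c then map (\<lambda>y. (2 * int c, y)) [r..T] @ map (\<lambda>y. (2 * int c + 1, y)) (rev [r..T])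
                  else [(2 * int c, r), (2 * int c + 1, r)])"

definition good :: "(nat \<Rightarrow> bool) \<Rightarrow> int \<Rightarrow> int \<Rightarrow> grid_point \<Rightarrow> grid_point \<Rightarrow> bool" where
  "good M r T a b \<longleftrightarrow> adjp a b \<and> edge_ok M r T {a, b}"

lemma upto_succ: "successively (\<lambda>a b. b = a + 1) [r..(T::int)]"
  unfolding successively_conv_nth by simp

lemma upto_hd: "r \<le> T \<Longrightarrow> hd [r..(T::int)] = r"
  by (simp add: upto_rec1)

lemma upto_last: "r \<le> T \<Longrightarrow> last [r..(T::int)] = T"
  by (simp add: upto_rec2)

lemma blk_props:
  assumes rT: "r < T"
  shows "blk M r T c \<noteq> []" "hd (blk M r T c) = (2 * int c, r)"
    "last (blk M r T c) = (2 * int c + 1, r)" "distinct (blk M r T c)"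
    "\<forall>p\<in>set (blk M r T c). fst p = 2 * int c \<or> fst p = 2 * int c + 1"
    "successively (good M r T) (blk M r T c)"
    "M c \<Longrightarrow> {(2 * int c, T), (2 * int c + 1, T)} \<in> set (edges (blk M r T c))"
proof -
  have ne: "[r..T] \<noteq> []" using rT by simp
  show "blk M r T c \<noteq> []" unfolding blk_def using ne by auto
  show "hd (blk M r T c) = (2 * int c, r)" unfolding blk_def using ne rT
    by (auto simp: hd_map upto_hd)
  show "last (blk M r T c) = (2 * int c + 1, r)" unfolding blk_def using ne rT
    by (auto simp: last_map last_rev upto_hd)
  show "distinct (blk M r T c)" unfolding blk_def
    by (auto simp: distinct_map inj_on_def)
  show "\<forall>p\<in>set (blk M r T c). fst p = 2 * int c \<or> fst p = 2 * int c + 1" unfolding blk_def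
    by auto
  show "successively (good M r T) (blk M r T c)"
  proof (cases "M c")
    case True
    have g1: "good M r T (2 * int c, y) (2 * int c, y + 1)" for y
      unfolding good_def adjp_def edge_ok_def using True by auto
    have g2: "good M r T (2 * int c + 1, y + 1) (2 * int c + 1, y)" for y
      unfolding good_def adjp_def edge_ok_def using True by (auto simp: insert_commute)
    have s1: "successively (good M r T) (map (\<lambda>y. (2 * int c, y)) [r..T])"
      unfolding successively_map
      by (rule successively_mono[OF upto_succ]) (auto simp: g1)
    have s2: "successively (good M r T) (map (\<lambda>y. (2 * int c + 1, y)) (rev [r..T]))"
      unfolding successively_map successively_rev
      by (rule successively_mono[OF upto_succ]) (auto simp: g2)
    have s3: "good M r T (2 * int c, T) (2 * int c + 1, T)"
      unfolding good_def adjp_def edge_ok_def using True by auto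
    show ?thesis unfolding blk_def using True s1 s2 s3 ne rT
      by (auto simp: successively_append_iff last_map hd_map hd_rev upto_last)
  next
    case False
    then show ?thesis unfolding blk_def
      by (auto simp: good_def adjp_def edge_ok_def)
  qed
  assume "M c"
  then show "{(2 * int c, T), (2 * int c + 1, T)} \<in> set (edges (blk M r T c))"
    unfolding blk_def using ne rT
    by (auto simp: edges_append last_map hd_map hd_rev upto_last)
qed


primrec ptsk :: "(nat \<Rightarrow> bool) \<Rightarrow> int \<Rightarrow> int \<Rightarrow> nat \<Rightarrow> grid_point list" where
  "ptsk M r T 0 = blk M r T 0"
| "ptsk M r T (Suc k) = ptsk M r T k @ blk M r T (Suc k)"

lemma edges_append_sub:
  "set (edges xs) \<union> set (edges ys) \<subseteq> set (edges (xs @ ys))"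
  by (cases "xs = []"; cases "ys = []") (auto simp: edges_append)

lemma ptsk_props:
  assumes rT: "r < T"
  shows "ptsk M r T k \<noteq> [] \<and> last (ptsk M r T k) = (2 * int k + 1, r) \<and> distinct (ptsk M r T k)
    \<and> (\<forall>p\<in>set (ptsk M r T k). fst p \<le> 2 * int k + 1)
    \<and> 2 \<le> length (ptsk M r T k)
    \<and> successively (good M r T) (ptsk M r T k)
    \<and> (\<forall>c\<le>k. M c \<longrightarrow> {(2 * int c, T), (2 * int c + 1, T)} \<in> set (edges (ptsk M r T k)))"
proof (induction k)
  case 0
  have "length (blk M r T 0) \<noteq> 0" "length (blk M r T 0) \<noteq> 1"
  proof -
    show "length (blk M r T 0) \<noteq> 0" using blk_props(1)[OF rT] by simp
    show "length (blk M r T 0) \<noteq> 1"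
    proof
      assume "length (blk M r T 0) = 1"
      then obtain a where "blk M r T 0 = [a]" by (auto simp: length_Suc_conv)
      then show False using blk_props(2,3)[OF rT, of M 0] by simp
    qed
  qed
  then have "2 \<le> length (blk M r T 0)" by linarith
  moreover have "\<forall>p\<in>set (blk M r T 0). fst p \<le> 1" using blk_props(5)[OF rT, of M 0] by force
  ultimately show ?case using blk_props[OF rT, of M 0] by simp
next
  case (Suc k)
  let ?A = "ptsk M r T k" and ?B = "blk M r T (Suc k)"
  have IH: "?A \<noteq> []" "last ?A = (2 * int k + 1, r)" "distinct ?A"
    "\<forall>p\<in>set ?A. fst p \<le> 2 * int k + 1" "2 \<le> length ?A" "successively (good M r T) ?A"
    "\<forall>c\<le>k. M c \<longrightarrow> {(2 * int c, T), (2 * int c + 1, T)} \<in> set (edges ?A)"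
    using Suc.IH by auto
  note B = blk_props[OF rT, of M "Suc k"]
  have disj: "set ?A \<inter> set ?B = {}" using IH(4) B(5) by fastforce
  have g: "good M r T (last ?A) (hd ?B)"
    unfolding good_def adjp_def edge_ok_def IH(2) B(2)
    by (intro conjI disjI1 exI[of _ "2 * int k + 1"]) auto
  have top: "\<forall>c\<le>Suc k. M c \<longrightarrow> {(2 * int c, T), (2 * int c + 1, T)} \<in> set (edges (?A @ ?B))"
  proof (intro allI impI)
    fix c assume c: "c \<le> Suc k" "M c"
    show "{(2 * int c, T), (2 * int c + 1, T)} \<in> set (edges (?A @ ?B))"
    proof (cases "c = Suc k")
      case True
      then show ?thesis using B(7) c(2) edges_append_sub[of ?A ?B] by auto
    next
      case False
      then show ?thesis using IH(7) c edges_append_sub[of ?A ?B] by auto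
    qed
  qed
  show ?case using IH B disj g top
    by (auto simp: successively_append_iff)
qed


theorem lemma2p2:
  fixes V :: "'a set" and Adj :: "'a \<Rightarrow> 'a \<Rightarrow> bool"
  assumes "simple_graph V Adj"
  shows "\<exists>P. EPG_rep V Adj P \<and> Helly_rep V P"
proof -
  have finV: "finite V" and inV: "\<And>u v. Adj u v \<Longrightarrow> u \<in> V \<and> v \<in> V"
    and sym: "\<And>u v. Adj u v \<Longrightarrow> Adj v u"
    using assms unfolding simple_graph_def by auto
  obtain f where f: "bij_betw f V {0..<card V}" using ex_bij_betw_finite_nat[OF finV] by blast
  define Cl where "Cl = {S. S \<subseteq> V \<and> (\<forall>u\<in>S. \<forall>v\<in>S. u \<noteq> v \<longrightarrow> Adj u v)}"
  have "finite Cl" unfolding Cl_def using finV by (auto intro: finite_subset[of _ "Pow V"])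
  then obtain cs where cs: "set cs = Cl" using finite_list by blast
  define m where "m = length cs"
  have "{} \<in> Cl" unfolding Cl_def by auto
  then have m1: "1 \<le> m" unfolding m_def using cs by (cases cs) auto
  define M where "M v c = (c < m \<and> v \<in> cs ! c)" for v c
  define r where "r v = int (f v)" for v
  define T where "T = int (card V)"
  define P where "P v = edges (ptsk (M v) (r v) T (m - 1))" for v
  have rT: "r v < T" if "v \<in> V" for v
    using f that unfolding r_def T_def bij_betw_def by auto
  have rinj: "r u \<noteq> r v" if "u \<in> V" "v \<in> V" "u \<noteq> v" for u v
    using f that unfolding r_def bij_betw_def inj_on_def by auto
  have PP: "ptsk (M v) (r v) T (m - 1) \<noteq> [] \<and> distinct (ptsk (M v) (r v) T (m - 1))
    \<and> 2 \<le> length (ptsk (M v) (r v) T (m - 1))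
    \<and> successively (good (M v) (r v) T) (ptsk (M v) (r v) T (m - 1))
    \<and> (\<forall>c\<le>m - 1. M v c \<longrightarrow> {(2 * int c, T), (2 * int c + 1, T)} \<in> set (P v))"
    if "v \<in> V" for v
    using ptsk_props[OF rT[OF that], of "M v" "m - 1"] unfolding P_def by blast
  have path: "is_grid_path (P v)" if "v \<in> V" for v
  proof -
    have "successively adjp (ptsk (M v) (r v) T (m - 1))"
      using PP[OF that] by (auto elim: successively_mono simp: good_def)
    then show ?thesis unfolding P_def using PP[OF that] grid_path_from_points by blast
  qed
  have top: "{(2 * int c, T), (2 * int c + 1, T)} \<in> set (P v)" if "v \<in> V" "c < m" "v \<in> cs ! c" for v c
    using PP[OF that(1)] that(2,3) m1 unfolding M_def by auto
  have clique_top: "\<exists>c. \<forall>v\<in>S. {(2 * int c, T), (2 * int c + 1, T)} \<in> set (P v)" if "S \<in> Cl" for S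
  proof -
    have "S \<in> set cs" using that cs by simp
    then obtain c where c: "c < m" "cs ! c = S" unfolding m_def by (metis in_set_conv_nth)
    have SV: "S \<subseteq> V" using that unfolding Cl_def by auto
    show ?thesis using top[of _ c] c SV by auto
  qed
  have share: "Adj u v" if hyp: "u \<in> V" "v \<in> V" "u \<noteq> v" "e \<in> set (P u)" "e \<in> set (P v)" for u v e
  proof -
    obtain a b where ab: "e = {a, b}" "edge_ok (M u) (r u) T {a, b}"
      using edges_succ[of "good (M u) (r u) T" _ e] PP[OF hyp(1)] hyp(4) unfolding P_def good_def by blast
    obtain a' b' where ab': "e = {a', b'}" "edge_ok (M v) (r v) T {a', b'}"
      using edges_succ[of "good (M v) (r v) T" _ e] PP[OF hyp(2)] hyp(5) unfolding P_def good_def by blast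
    obtain c where "M u c" "M v c"
      using edge_ok_collide[of "M u" "r u" T e "M v" "r v"] ab ab' rinj[OF hyp(1-3)] rT hyp(1,2) by auto
    then have "cs ! c \<in> Cl" "u \<in> cs ! c" "v \<in> cs ! c" unfolding M_def m_def using cs by auto
    then show ?thesis using hyp(3) unfolding Cl_def by auto
  qed
  have epg: "EPG_rep V Adj P"
    unfolding EPG_rep_def
  proof (intro conjI ballI impI)
    fix v assume "v \<in> V" then show "is_grid_path (P v)" by (rule path)
  next
    fix u v assume uv: "u \<in> V" "v \<in> V" "u \<noteq> v"
    show "Adj u v \<longleftrightarrow> set (P u) \<inter> set (P v) \<noteq> {}"
    proof
      assume "Adj u v"
      then have "{u, v} \<in> Cl" unfolding Cl_def using uv sym by auto
      then show "set (P u) \<inter> set (P v) \<noteq> {}" using clique_top by blast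
    next
      assume "set (P u) \<inter> set (P v) \<noteq> {}"
      then show "Adj u v" using share uv by blast
    qed
  qed
  have helly: "Helly_rep V P"
    unfolding Helly_rep_def
  proof (intro allI impI)
    fix S assume S: "S \<subseteq> V" "\<forall>u\<in>S. \<forall>v\<in>S. set (P u) \<inter> set (P v) \<noteq> {}"
    have "S \<in> Cl" unfolding Cl_def using S share by blast
    then obtain c where c: "\<forall>v\<in>S. {(2 * int c, T), (2 * int c + 1, T)} \<in> set (P v)"
      using clique_top by blast
    have "is_grid_edge {(2 * int c, T), (2 * int c + 1, T)}" unfolding is_grid_edge_def
      by (intro exI[of _ "(2 * int c, T)"] exI[of _ "(2 * int c + 1, T)"]) simp
    then show "\<exists>e. is_grid_edge e \<and> (\<forall>v\<in>S. e \<in> set (P v))" using c by blast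
  qed
  show ?thesis using epg helly by blast
qed

end
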